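(* Let $(X,d_X,\mu_X)$ be a compact metric measure space and let $\phi_i$ be an $L^2$-normalized eigenfunction of the distance kernel operator $D^X$ with eigenvalue $\lambda_i$. Then the function $\lambda_i\phi_i$ ($=D^X\phi_i$) is $\sqrt{\operatorname{Vol}(X)}$-Lipschitz. Hence, if $\lambda_i\neq0$, $\phi_i$ is $\big(\sqrt{\operatorname{Vol}(X)}/|\lambda_i|\big)$-Lipschitz.
   Context: A metric measure space carries a Radon Borel measure; $\operatorname{Vol}(X)=\mu_X(X)$. The distance kernel operator is $(D^Xf)(x)=\int_X f(y)d_X(x,y)\,d\mu_X(y)$ on $L^2(X,\mu_X)$. *)

theory Defs
  imports "HOL-Analysis.Analysis"
begin

definition distance_kernel_op :: "'a::metric_space measure \<Rightarrow> ('a \<Rightarrow> real) \<Rightarrow> 'a \<Rightarrow> real" where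
  "distance_kernel_op M f x = (\<integral>y. f y * dist x y \<partial>M)"

end

theory Submission
  imports Defs
begin

theorem lemma3p2:
  fixes X :: "'a::metric_space set" and M :: "'a measure"
    and \<phi> :: "'a \<Rightarrow> real" and lam :: real
  assumes "compact X"
    and "space M = X" and "sets M = sets (restrict_space borel X)"
    and "finite_measure M"
    and "\<phi> \<in> borel_measurable M"
    and "integrable M (\<lambda>x. (\<phi> x)\<^sup>2)"
    and "(\<integral>x. (\<phi> x)\<^sup>2 \<partial>M) = 1"
    and "AE x in M. distance_kernel_op M \<phi> x = lam * \<phi> x"
  shows "(sqrt (measure M X))-lipschitz_on X (distance_kernel_op M \<phi>)
    \<and> (lam \<noteq> 0 \<longrightarrow> (\<exists>\<psi>. (sqrt (measure M X) / \<bar>lam\<bar>)-lipschitz_on X \<psi>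
                          \<and> (AE x in M. \<psi> x = \<phi> x)))"
proof -
  interpret finite_measure M by fact
  define m where "m = measure M X"
  define D where "D = distance_kernel_op M \<phi>"
  have meas_cong: "\<And>f. f \<in> borel_measurable M \<longleftrightarrow> f \<in> borel_measurable (restrict_space borel X)"
    by (simp only: measurable_cong_sets[OF assms(3) refl])
  have dmeas: "(\<lambda>y. dist x y) \<in> borel_measurable M" for x
    unfolding meas_cong
    by (intro borel_measurable_continuous_on_restrict continuous_intros)
  have m0: "m > 0"
  proof (rule ccontr)
    assume "\<not> m > 0"
    hence "m = 0" using m_def measure_nonneg[of M X] by linarith
    hence "emeasure M (space M) = 0" using assms(2) m_def emeasure_eq_measure by simp
    hence "AE x in M. (\<phi> x)\<^sup>2 = 0"
      by (intro AE_I'[of "space M"]) (auto simp: null_sets_def)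
    hence "(\<integral>x. (\<phi> x)\<^sup>2 \<partial>M) = (\<integral>x. 0 \<partial>M)"
      by (intro integral_cong_AE) (use assms(5) in auto)
    thus False using assms(7) by simp
  qed
  define t where "t = sqrt m"
  have t0: "t > 0" using m0 t_def by simp
  have ptw: "\<bar>\<phi> y\<bar> \<le> (t * (\<phi> y)\<^sup>2 + 1 / t) / 2" for y
  proof -
    have "0 \<le> (t * \<bar>\<phi> y\<bar> - 1)\<^sup>2 / t" using t0 by simp
    also have "(t * \<bar>\<phi> y\<bar> - 1)\<^sup>2 / t = t * (\<phi> y)\<^sup>2 + 1 / t - 2 * \<bar>\<phi> y\<bar>"
      using t0 by (simp add: field_simps power2_eq_square)
    finally show ?thesis by simp
  qed
  have intR: "integrable M (\<lambda>y. (t * (\<phi> y)\<^sup>2 + 1 / t) / 2)"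
    using assms(6) by auto
  have intabs: "integrable M (\<lambda>y. \<bar>\<phi> y\<bar>)"
  proof (rule Bochner_Integration.integrable_bound[OF intR])
    show "(\<lambda>y. \<bar>\<phi> y\<bar>) \<in> borel_measurable M" using assms(5) by simp
    show "AE y in M. norm \<bar>\<phi> y\<bar> \<le> norm ((t * (\<phi> y)\<^sup>2 + 1 / t) / 2)"
    proof (rule AE_I2)
      fix y
      have "\<bar>\<phi> y\<bar> \<le> (t * (\<phi> y)\<^sup>2 + 1 / t) / 2" by (rule ptw)
      also have "\<dots> \<le> \<bar>(t * (\<phi> y)\<^sup>2 + 1 / t) / 2\<bar>" by (rule abs_ge_self)
      finally show "norm \<bar>\<phi> y\<bar> \<le> norm ((t * (\<phi> y)\<^sup>2 + 1 / t) / 2)" by simp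
    qed
  qed
  have int1: "(\<integral>y. \<bar>\<phi> y\<bar> \<partial>M) \<le> t"
  proof -
    have "(\<integral>y. \<bar>\<phi> y\<bar> \<partial>M) \<le> (\<integral>y. (t * (\<phi> y)\<^sup>2 + 1 / t) / 2 \<partial>M)"
      by (rule integral_mono[OF intabs intR ptw])
    also have "\<dots> = (t * 1 + m / t) / 2"
      using assms(6,7,2) m_def by (simp add: integral_diff)
    also have "\<dots> = t" using t0 t_def m0
      by (simp add: field_simps)
    finally show ?thesis .
  qed
  have intphi: "integrable M \<phi>"
    using intabs assms(5) by (simp add: integrable_abs_iff)
  have intk: "integrable M (\<lambda>y. \<phi> y * dist x y)" if "x \<in> X" for x
  proof -
    obtain B where B: "\<forall>y\<in>X. dist x y \<le> B"
      using compact_imp_bounded[OF assms(1)] bounded_any_center by (metis mem_cball)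
    show ?thesis
    proof (rule Bochner_Integration.integrable_bound[where f="\<lambda>y. \<bar>\<phi> y\<bar> * B"])
      show "integrable M (\<lambda>y. \<bar>\<phi> y\<bar> * B)" using intabs by simp
      show "(\<lambda>y. \<phi> y * dist x y) \<in> borel_measurable M" using assms(5) dmeas by simp
      show "AE y in M. norm (\<phi> y * dist x y) \<le> norm (\<bar>\<phi> y\<bar> * B)"
      proof (rule AE_I2)
        fix y assume "y \<in> space M"
        hence "dist x y \<le> B" using B assms(2) by auto
        hence "\<bar>\<phi> y\<bar> * dist x y \<le> \<bar>\<phi> y\<bar> * \<bar>B\<bar>"
          by (intro mult_left_mono) auto
        thus "norm (\<phi> y * dist x y) \<le> norm (\<bar>\<phi> y\<bar> * B)" by (simp add: abs_mult)
      qed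
    qed
  qed
  have key: "\<bar>D x - D x'\<bar> \<le> t * dist x x'" if "x \<in> X" "x' \<in> X" for x x'
  proof -
    have "D x - D x' = (\<integral>y. \<phi> y * dist x y - \<phi> y * dist x' y \<partial>M)"
      unfolding D_def distance_kernel_op_def
      by (rule Bochner_Integration.integral_diff[symmetric]) (use intk that in auto)
    hence "\<bar>D x - D x'\<bar> \<le> (\<integral>y. \<bar>\<phi> y * dist x y - \<phi> y * dist x' y\<bar> \<partial>M)"
      by simp
    also have "\<dots> \<le> (\<integral>y. \<bar>\<phi> y\<bar> * dist x x' \<partial>M)"
    proof (rule integral_mono)
      show "integrable M (\<lambda>y. \<bar>\<phi> y * dist x y - \<phi> y * dist x' y\<bar>)"
        using intk that by auto
      show "integrable M (\<lambda>y. \<bar>\<phi> y\<bar> * dist x x')" using intabs by simp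
      fix y
      have "\<bar>\<phi> y * dist x y - \<phi> y * dist x' y\<bar> = \<bar>\<phi> y\<bar> * \<bar>dist x y - dist x' y\<bar>"
        by (simp add: abs_mult right_diff_distrib[symmetric])
      also have "\<dots> \<le> \<bar>\<phi> y\<bar> * dist x x'"
        by (intro mult_left_mono) (use dist_triangle2[of x y x'] dist_triangle2[of x' y x] dist_commute[of x x'] dist_commute[of y x'] dist_commute[of y x] in \<open>auto simp: abs_le_iff\<close>)
      finally show "\<bar>\<phi> y * dist x y - \<phi> y * dist x' y\<bar> \<le> \<bar>\<phi> y\<bar> * dist x x'" .
    qed
    also have "\<dots> = (\<integral>y. \<bar>\<phi> y\<bar> \<partial>M) * dist x x'" by simp
    also have "\<dots> \<le> t * dist x x'" using int1 by (intro mult_right_mono) auto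
    finally show ?thesis .
  qed
  have L1: "t-lipschitz_on X D"
    by (rule lipschitz_onI) (use key t0 in \<open>auto simp: dist_real_def\<close>)
  have L2: "\<exists>\<psi>. (t / \<bar>lam\<bar>)-lipschitz_on X \<psi> \<and> (AE x in M. \<psi> x = \<phi> x)" if "lam \<noteq> 0"
  proof (intro exI conjI)
    show "(t / \<bar>lam\<bar>)-lipschitz_on X (\<lambda>x. D x / lam)"
    proof (rule lipschitz_onI)
      fix x x' assume "x \<in> X" "x' \<in> X"
      have "dist (D x / lam) (D x' / lam) = \<bar>D x - D x'\<bar> / \<bar>lam\<bar>"
        by (simp add: dist_real_def diff_divide_distrib[symmetric])
      also have "\<dots> \<le> t * dist x x' / \<bar>lam\<bar>"
        using key[OF \<open>x \<in> X\<close> \<open>x' \<in> X\<close>] by (intro divide_right_mono) auto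
      finally show "dist (D x / lam) (D x' / lam) \<le> t / \<bar>lam\<bar> * dist x x'" by simp
    qed (use t0 in auto)
    show "AE x in M. D x / lam = \<phi> x"
      using assms(8) unfolding D_def by eventually_elim (use that in simp)
  qed
  show ?thesis using L1 L2 unfolding t_def m_def D_def by simp
qed

end
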